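(* Let $a\in\mathbb{N}_0$ and $b\notin\mathbb{Z}$, and let $\rho(x;a,b)$ be the unique quasi-rational antiderivative of $(1-x)^a(1+x)^b$ belonging to $(1+x)^{b+1}\mathcal{Q}_\pm$. Then $\rho(1;a,b)=\nu(a,b)$, where $\nu(a,b)=2^{1+a+b}\frac{\Gamma(a+1)\Gamma(b+1)}{\Gamma(a+b+2)}$.
   Context: $\mathcal{Q}_\pm$ is the set of rational functions regular at $x=1$ and $x=-1$. A function is quasi-rational if its logarithmic derivative is rational. *)

theory Defs
  imports "HOL-Analysis.Analysis" "HOL-Computational_Algebra.Polynomial"
begin

definition nu :: "nat \<Rightarrow> real \<Rightarrow> real" where
  "nu a b = 2 powr (1 + real a + b) * Gamma (real a + 1) * Gamma (b + 1) / Gamma (real a + b + 2)"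

text \<open>A rational function p/q regular at x = 1 and x = -1 (an element of Q_pm).\<close>
definition in_Qpm :: "real poly \<Rightarrow> real poly \<Rightarrow> bool" where
  "in_Qpm p q \<longleftrightarrow> poly q 1 \<noteq> 0 \<and> poly q (-1) \<noteq> 0"

definition is_rho :: "nat \<Rightarrow> real \<Rightarrow> real poly \<Rightarrow> real poly \<Rightarrow> bool" where
  "is_rho a b p q \<longleftrightarrow> in_Qpm p q \<and>
     (\<forall>x. -1 < x \<and> x < 1 \<and> poly q x \<noteq> 0 \<longrightarrow>
        ((\<lambda>t. (1 + t) powr (b + 1) * poly p t / poly q t)
           has_real_derivative ((1 - x) ^ a * (1 + x) powr b)) (at x))"

definition rho_at_1 :: "real \<Rightarrow> real poly \<Rightarrow> real poly \<Rightarrow> real" where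
  "rho_at_1 b p q = 2 powr (b + 1) * poly p 1 / poly q 1"

end

theory Submission
  imports Defs
begin


lemma pascal_sum:
  fixes g :: "nat \<Rightarrow> real"
  shows "(\<Sum>k\<le>Suc a. real (Suc a choose k) * g k) =
         (\<Sum>k\<le>a. real (a choose k) * g k) + (\<Sum>k\<le>a. real (a choose k) * g (Suc k))"
proof -
  have "(\<Sum>k\<le>Suc a. real (Suc a choose k) * g k) = g 0 + (\<Sum>k\<le>a. real (Suc a choose Suc k) * g (Suc k))"
    by (subst sum.atMost_Suc_shift) simp
  also have "\<dots> = g 0 + (\<Sum>k\<le>a. real (a choose Suc k) * g (Suc k)) + (\<Sum>k\<le>a. real (a choose k) * g (Suc k))"
    by (simp add: sum.distrib algebra_simps)
  also have "g 0 + (\<Sum>k\<le>a. real (a choose Suc k) * g (Suc k)) = (\<Sum>k\<le>Suc a. real (a choose k) * g k)"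
    by (subst sum.atMost_Suc_shift) simp
  also have "\<dots> = (\<Sum>k\<le>a. real (a choose k) * g k)" by simp
  finally show ?thesis .
qed

lemma notint_nz: "(s::real) \<notin> \<int> \<Longrightarrow> s + real k \<noteq> 0"
proof
  assume "s \<notin> \<int>" "s + real k = 0"
  hence "s = - real k" by linarith
  thus False using \<open>s \<notin> \<int>\<close> by (metis Ints_minus Ints_of_nat)
qed

lemma notint_poch: "(s::real) \<notin> \<int> \<Longrightarrow> pochhammer s n \<noteq> 0"
  using notint_nz by (auto simp: pochhammer_eq_0_iff) 

lemma alt_sum:
  fixes s :: real
  assumes "s \<notin> \<int>"
  shows "(\<Sum>k\<le>a. real (a choose k) * (-1)^k / (s + k)) = fact a / pochhammer s (Suc a)"
  using assms
proof (induction a arbitrary: s)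
  case 0
  then show ?case by simp
next
  case (Suc a)
  have s1: "s + 1 \<notin> \<int>" using Suc.prems
    by (metis Ints_1 Ints_diff add_diff_cancel_right')
  have "(\<Sum>k\<le>Suc a. real (Suc a choose k) * (-1)^k / (s + k))
      = (\<Sum>k\<le>a. real (a choose k) * ((-1)^k / (s + k))) + (\<Sum>k\<le>a. real (a choose k) * ((-1)^(Suc k) / (s + Suc k)))"
    using pascal_sum[of a "\<lambda>k. (-1)^k / (s + k)"] by (simp add: mult.assoc)
  also have "(\<Sum>k\<le>a. real (a choose k) * ((-1)^(Suc k) / (s + Suc k))) = - (\<Sum>k\<le>a. real (a choose k) * (-1)^k / ((s + 1) + k))"
    unfolding sum_negf[symmetric] by (rule sum.cong) (auto simp: algebra_simps)
  also have "(\<Sum>k\<le>a. real (a choose k) * ((-1)^k / (s + k))) = (\<Sum>k\<le>a. real (a choose k) * (-1)^k / (s + k))"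
    by simp
  also have "\<dots> + - (\<Sum>k\<le>a. real (a choose k) * (-1)^k / ((s + 1) + k)) = fact a / pochhammer s (Suc a) - fact a / pochhammer (s+1) (Suc a)"
    using Suc.IH[OF Suc.prems] Suc.IH[OF s1] by simp
  also have "\<dots> = fact (Suc a) / pochhammer s (Suc (Suc a))"
  proof -
    have A: "pochhammer s (Suc a) = s * pochhammer (s+1) a" by (rule pochhammer_rec)
    have B: "pochhammer (s+1) (Suc a) = pochhammer (s+1) a * (s + 1 + a)" by (rule pochhammer_Suc)
    have C: "pochhammer s (Suc (Suc a)) = s * (pochhammer (s+1) a * (s + 1 + a))"
      using pochhammer_rec[of s "Suc a"] B by simp
    have nz1: "s \<noteq> 0" using notint_nz[OF Suc.prems, of 0] by simp
    have nz2: "s + 1 + a \<noteq> 0" using notint_nz[OF s1, of a] by simp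
    have nz3: "pochhammer (s+1) a \<noteq> 0" using notint_poch[OF s1] .
    have key: "f / (s * P) - f / (P * (s + 1 + n)) = ((n+1) * f) / (s * (P * (s + 1 + n)))"
      if "s \<noteq> 0" "s + 1 + n \<noteq> 0" "P \<noteq> 0" for f P n :: real
    proof -
      have h1: "s * P \<noteq> 0" "P * (s + 1 + n) \<noteq> 0" "s * (P * (s + 1 + n)) \<noteq> 0" using that by auto
      show ?thesis using h1 by (simp add: divide_simps) (simp add: algebra_simps)
    qed
    show ?thesis unfolding A B C using key[OF nz1 nz2 nz3, of "fact a"]
      by (simp add: algebra_simps)
  qed
  finally show ?case .
qed



definition Lop :: "real \<Rightarrow> real poly \<Rightarrow> real poly \<Rightarrow> real poly" where
  "Lop s p q = smult s (p * q) + [:1,1:] * (pderiv p * q - p * pderiv q)"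

lemma coeff_mult_le:
  fixes A B :: "real poly"
  assumes "degree A \<le> i" "degree B \<le> j"
  shows "coeff (A * B) (i + j) = coeff A i * coeff B j"
proof (cases "degree A < i \<or> degree B < j")
  case True
  have "degree (A * B) < i + j" using True assms degree_mult_le[of A B] by linarith
  hence "coeff (A * B) (i + j) = 0" by (simp add: coeff_eq_0)
  moreover have "coeff A i * coeff B j = 0" using True by (auto simp: coeff_eq_0)
  ultimately show ?thesis by simp
next
  case False
  hence "degree A = i" "degree B = j" using assms by auto
  thus ?thesis using coeff_mult_degree_sum[of A B] by simp
qed

lemma coeff_theta: "coeff ([:0,1:] * pderiv (R::real poly)) k = of_nat k * coeff R k"
  by (cases k) (auto simp: coeff_pderiv)

lemma degree_theta: "degree ([:0,1:] * pderiv (R::real poly)) \<le> degree R"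
proof (rule degree_le, intro allI impI)
  fix i assume "degree R < i"
  hence "coeff R i = 0" by (simp add: coeff_eq_0)
  thus "coeff ([:0,1:] * pderiv R) i = 0" by (simp only: coeff_theta mult_zero_right)
qed

lemma coeff_pderiv_mult_top:
  fixes R q :: "real poly"
  shows "coeff (pderiv R * q) (degree R + degree q) = 0"
proof (cases "degree R = 0")
  case True
  hence "pderiv R = 0" using pderiv_eq_0_iff by blast
  thus ?thesis by simp
next
  case False
  have "degree (pderiv R * q) \<le> degree R - 1 + degree q"
    using degree_mult_le[of "pderiv R" q] degree_pderiv[of R] by simp
  hence "degree (pderiv R * q) < degree R + degree q" using False by linarith
  thus ?thesis by (simp add: coeff_eq_0)
qed

lemma Lop_zero:
  fixes R q :: "real poly"
  assumes s: "s \<notin> \<int>" and q: "q \<noteq> 0" and L: "Lop s R q = 0"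
  shows "R = 0"
proof (rule ccontr)
  assume R: "R \<noteq> 0"
  define n where "n = degree R"
  define m where "m = degree q"
  define tR where "tR = [:0,1:] * pderiv R"
  define tq where "tq = [:0,1:] * pderiv q"
  have ctR: "coeff tR k = of_nat k * coeff R k" for k unfolding tR_def by (rule coeff_theta)
  have ctq: "coeff tq k = of_nat k * coeff q k" for k unfolding tq_def by (rule coeff_theta)
  have dtR: "degree tR \<le> n" unfolding tR_def n_def by (rule degree_theta)
  have dtq: "degree tq \<le> m" unfolding tq_def m_def by (rule degree_theta)
  have dec: "Lop s R q = smult s (R * q) + (pderiv R * q - R * pderiv q)
      + (tR * q - R * tq)"
  proof -
    have "[:1,1:] = (1::real poly) + [:0,1:]" by (simp add: one_pCons)
    thus ?thesis unfolding Lop_def tR_def tq_def by (simp add: algebra_simps)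
  qed
  have c1: "coeff (smult s (R * q)) (n + m) = s * coeff R n * coeff q m"
    using coeff_mult_degree_sum[of R q] by (simp add: n_def m_def)
  have c2: "coeff (pderiv R * q) (n + m) = 0"
    using coeff_pderiv_mult_top[of R q] by (simp add: n_def m_def)
  have c3: "coeff (R * pderiv q) (n + m) = 0"
    using coeff_pderiv_mult_top[of q R] by (simp add: n_def m_def mult.commute add.commute)
  have c4: "coeff (tR * q) (n + m) = of_nat n * coeff R n * coeff q m"
    using coeff_mult_le[OF dtR, of q m] by (simp add: m_def ctR)
  have c5: "coeff (R * tq) (n + m) = coeff R n * (of_nat m * coeff q m)"
    using coeff_mult_le[OF _ dtq, of R n] by (simp add: n_def ctq)
  have "coeff (Lop s R q) (n + m) = (s + of_nat n - of_nat m) * (coeff R n * coeff q m)"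
    unfolding dec using c1 c2 c3 c4 c5 by (simp add: algebra_simps)
  moreover have "coeff R n * coeff q m \<noteq> 0" using R q by (simp add: n_def m_def)
  ultimately have "s = of_nat m - of_nat n" using L by simp
  hence "s \<in> \<int>" by simp
  thus False using s by simp
qed

lemma Lop_comb: "Lop s (p - P * q) q = Lop s p q - q^2 * Lop s P 1"
  unfolding Lop_def by (simp add: pderiv_diff pderiv_mult smult_add_right smult_diff_right algebra_simps power2_eq_square)



lemma alg_step:
  fixes y X p p' q q' r s :: real
  assumes "y > 0" "q \<noteq> 0"
    and "((s * y * p + p' * (y * X)) * q - y * X * p * q') / (q * q) = r * y"
  shows "s * (p * q) + X * (p' * q - p * q') = r * q^2"
proof -
  have "((s * y * p + p' * (y * X)) * q - y * X * p * q') = r * y * (q * q)"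
    using assms by (simp add: divide_eq_eq)
  hence "y * (s * (p * q) + X * (p' * q - p * q')) = y * (r * q^2)"
    by (simp add: algebra_simps power2_eq_square)
  thus ?thesis using assms(1) by simp
qed

lemma deriv_to_Lop:
  fixes p q :: "real poly" and b :: real
  assumes q: "q \<noteq> 0"
    and D: "\<forall>x. -1 < x \<and> x < 1 \<and> poly q x \<noteq> 0 \<longrightarrow>
        ((\<lambda>t. (1 + t) powr (b + 1) * poly p t / poly q t)
           has_real_derivative ((1 - x) ^ a * (1 + x) powr b)) (at x)"
  shows "Lop (b + 1) p q = [:1,-1:]^a * q^2"
proof -
  define E where "E = Lop (b + 1) p q - [:1,-1:]^a * q^2"
  have ptw: "poly E x = 0" if x: "-1 < x" "x < 1" "poly q x \<noteq> 0" for x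
  proof -
    have pos: "1 + x > 0" using x by simp
    have d1: "((\<lambda>t. (1 + t) powr (b + 1)) has_real_derivative (b + 1) * (1 + x) powr (b + 1 - of_nat 1) * 1) (at x)"
      by (rule DERIV_fun_powr) (auto intro!: derivative_eq_intros simp: pos)
    have d2: "((\<lambda>t. (1 + t) powr (b + 1) * poly p t / poly q t) has_real_derivative
        (((b + 1) * (1 + x) powr b * poly p x + poly (pderiv p) x * (1 + x) powr (b + 1)) * poly q x
          - (1 + x) powr (b + 1) * poly p x * poly (pderiv q) x) / (poly q x * poly q x)) (at x)"
      using DERIV_divide[OF DERIV_mult[OF d1 poly_DERIV[of p x]] poly_DERIV[of q x] x(3)]
      by simp
    have eq: "(((b + 1) * (1 + x) powr b * poly p x + poly (pderiv p) x * (1 + x) powr (b + 1)) * poly q x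
          - (1 + x) powr (b + 1) * poly p x * poly (pderiv q) x) / (poly q x * poly q x)
          = (1 - x) ^ a * (1 + x) powr b"
      using DERIV_unique[OF d2 D[rule_format, OF conjI[OF x(1) conjI[OF x(2) x(3)]]]] .
    have pw: "(1 + x) powr (b + 1) = (1 + x) powr b * (1 + x)"
    proof -
      have "1 + x \<noteq> 0" "\<bar>1 + x\<bar> = 1 + x" using pos by linarith+
      thus ?thesis by (simp add: powr_add)
    qed
    have eq2: "(((b + 1) * ((1 + x) powr b) * poly p x + poly (pderiv p) x * (((1 + x) powr b) * (1 + x))) * poly q x
          - ((1 + x) powr b) * (1 + x) * poly p x * poly (pderiv q) x) / (poly q x * poly q x)
          = (1 - x) ^ a * (1 + x) powr b"
      using eq unfolding pw .
    have "(b + 1) * (poly p x * poly q x) + (1 + x) * (poly (pderiv p) x * poly q x - poly p x * poly (pderiv q) x)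
        = (1 - x) ^ a * (poly q x)^2"
    proof (rule alg_step[OF _ x(3) eq2])
      have "1 + x \<noteq> 0" using pos by linarith
      thus "(1 + x) powr b > 0" by simp
    qed
    thus ?thesis unfolding E_def Lop_def by (simp add: algebra_simps)
  qed
  show ?thesis
  proof (rule ccontr)
    assume "Lop (b + 1) p q \<noteq> [:1,-1:]^a * q^2"
    hence E0: "E \<noteq> 0" unfolding E_def by simp
    have "{x. -1 < x \<and> x < (1::real)} \<subseteq> {x. poly E x = 0} \<union> {x. poly q x = 0}"
      using ptw by auto
    moreover have "finite ({x. poly E x = 0} \<union> {x. poly q x = 0})"
      using poly_roots_finite[OF E0] poly_roots_finite[OF q] by simp
    ultimately have "finite {x. -1 < x \<and> x < (1::real)}" by (rule finite_subset)
    moreover have "{x. -1 < x \<and> x < (1::real)} = {-1<..<1}" by auto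
    moreover have "\<not> finite {-1<..<(1::real)}" by (rule infinite_Ioo) simp
    ultimately show False by simp
  qed
qed



definition cc :: "nat \<Rightarrow> real \<Rightarrow> nat \<Rightarrow> real" where
  "cc a b k = real (a choose k) * 2^(a-k) * (-1)^k / (b + 1 + real k)"

definition Pex :: "nat \<Rightarrow> real \<Rightarrow> real poly" where
  "Pex a b = (\<Sum>k\<le>a. smult (cc a b k) ([:1,1:]^k))"

lemma pderiv_sum_gen: "pderiv (\<Sum>k\<in>A. f k) = (\<Sum>k\<in>A. pderiv (f k))"
  by (induction A rule: infinite_finite_induct) (auto simp: pderiv_add)

lemma theta1: "[:1,1:] * pderiv ([:1,1:]^k) = smult (of_nat k) ([:1,1::real:]^k)"
proof (cases k)
  case 0 then show ?thesis by simp
next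
  case (Suc j)
  have "pderiv ([:1,1::real:]^Suc j) = smult (of_nat (Suc j)) ([:1,1:]^j) * pderiv [:1,1:]"
    by (rule pderiv_power_Suc)
  moreover have "pderiv [:1,1::real:] = 1" by (simp add: pderiv_pCons one_pCons)
  ultimately show ?thesis using Suc by (simp add: algebra_simps)
qed

lemma poly_Pex: "poly (Pex a b) x = (\<Sum>k\<le>a. cc a b k * (1 + x)^k)"
  unfolding Pex_def by (simp add: poly_sum)

lemma poly_theta_Pex: "(1 + x) * poly (pderiv (Pex a b)) x = (\<Sum>k\<le>a. cc a b k * real k * (1 + x)^k)"
proof -
  have "[:1,1:] * pderiv (Pex a b) = (\<Sum>k\<le>a. smult (cc a b k) ([:1,1:] * pderiv ([:1,1:]^k)))"
    unfolding Pex_def pderiv_sum_gen by (simp add: sum_distrib_left pderiv_smult)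
  also have "\<dots> = (\<Sum>k\<le>a. smult (cc a b k) (smult (of_nat k) ([:1,1:]^k)))"
    by (simp only: theta1)
  finally have "poly ([:1,1:] * pderiv (Pex a b)) x = poly (\<Sum>k\<le>a. smult (cc a b k) (smult (of_nat k) ([:1,1:]^k))) x"
    by simp
  thus ?thesis by (simp add: poly_sum mult.assoc distrib_right)
qed

lemma evalid:
  assumes "b \<notin> \<int>"
  shows "(b + 1) * poly (Pex a b) x + (1 + x) * poly (pderiv (Pex a b)) x = (1 - x)^a"
proof -
  have b1: "b + 1 \<notin> \<int>" using assms by (metis Ints_1 Ints_diff add_diff_cancel_right')
  have "(b + 1) * poly (Pex a b) x + (1 + x) * poly (pderiv (Pex a b)) x
      = (\<Sum>k\<le>a. (cc a b k * (b + 1 + real k)) * (1 + x)^k)"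
    unfolding poly_Pex poly_theta_Pex sum_distrib_left sum.distrib[symmetric]
    by (rule sum.cong[OF refl]) (simp add: algebra_simps)
  also have "\<dots> = (\<Sum>k\<le>a. real (a choose k) * (-(1 + x))^k * 2^(a-k))"
  proof (rule sum.cong[OF refl])
    fix k
    have nz: "b + 1 + real k \<noteq> 0" using notint_nz[OF b1, of k] .
    have e1: "cc a b k * (b + 1 + real k) = real (a choose k) * 2^(a-k) * (-1)^k"
      unfolding cc_def using nz by simp
    have e2: "(-(1 + x))^k = (-1)^k * (1 + x)^k" by (rule power_minus)
    show "cc a b k * (b + 1 + real k) * (1 + x) ^ k = real (a choose k) * (- (1 + x)) ^ k * 2 ^ (a - k)"
      unfolding e1 e2 by (simp only: mult_ac)
  qed
  also have "\<dots> = (-(1 + x) + 2)^a" by (rule binomial_ring[symmetric])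
  also have "\<dots> = (1 - x)^a" by simp
  finally show ?thesis .
qed

lemma Pex_rho:
  assumes "b \<notin> \<int>"
  shows "is_rho a b (Pex a b) 1"
  unfolding is_rho_def in_Qpm_def
proof (intro conjI allI impI)
  fix x :: real assume x: "-1 < x \<and> x < 1 \<and> poly 1 x \<noteq> 0"
  have pos: "1 + x > 0" using x by simp
  have nz: "1 + x \<noteq> 0" "\<bar>1 + x\<bar> = 1 + x" using pos by linarith+
  have d1: "((\<lambda>t. (1 + t) powr (b + 1)) has_real_derivative (b + 1) * (1 + x) powr (b + 1 - of_nat 1) * 1) (at x)"
    by (rule DERIV_fun_powr) (auto intro!: derivative_eq_intros simp: pos)
  have d2: "((\<lambda>t. (1 + t) powr (b + 1) * poly (Pex a b) t) has_real_derivative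
      (b + 1) * (1 + x) powr b * poly (Pex a b) x + poly (pderiv (Pex a b)) x * (1 + x) powr (b + 1)) (at x)"
    using DERIV_mult[OF d1 poly_DERIV[of "Pex a b" x]] by simp
  have pw: "(1 + x) powr (b + 1) = (1 + x) powr b * (1 + x)"
    using nz by (simp add: powr_add)
  have "(b + 1) * (1 + x) powr b * poly (Pex a b) x + poly (pderiv (Pex a b)) x * (1 + x) powr (b + 1)
      = (1 + x) powr b * ((b + 1) * poly (Pex a b) x + (1 + x) * poly (pderiv (Pex a b)) x)"
    unfolding pw by (simp add: algebra_simps)
  also have "\<dots> = (1 - x) ^ a * (1 + x) powr b" using evalid[OF assms] by simp
  finally have d3: "((\<lambda>t. (1 + t) powr (b + 1) * poly (Pex a b) t) has_real_derivative
      (1 - x) ^ a * (1 + x) powr b) (at x)" using d2 by simp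
  show "((\<lambda>t. (1 + t) powr (b + 1) * poly (Pex a b) t / poly 1 t) has_real_derivative
      (1 - x) ^ a * (1 + x) powr b) (at x)" using d3 by simp
qed auto

lemma Pex_value:
  assumes "b \<notin> \<int>"
  shows "2 powr (b + 1) * poly (Pex a b) 1 = nu a b"
proof -
  have b1: "b + 1 \<notin> \<int>" using assms by (metis Ints_1 Ints_diff add_diff_cancel_right')
  have "poly (Pex a b) 1 = (\<Sum>k\<le>a. 2^a * (real (a choose k) * (-1)^k / (b + 1 + k)))"
    unfolding poly_Pex
  proof (rule sum.cong[OF refl])
    fix k assume "k \<in> {..a}"
    hence "(2::real)^(a-k) * 2^k = 2^a" by (simp add: power_add[symmetric])
    thus "cc a b k * (1 + 1) ^ k = 2 ^ a * (real (a choose k) * (- 1) ^ k / (b + 1 + real k))"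
      unfolding cc_def by (simp add: algebra_simps)
  qed
  also have "\<dots> = 2^a * (fact a / pochhammer (b + 1) (Suc a))"
    by (simp only: sum_distrib_left[symmetric] alt_sum[OF b1])
  finally have P1: "poly (Pex a b) 1 = 2^a * (fact a / pochhammer (b + 1) (Suc a))" .
  have np: "b + 1 \<notin> \<int>\<^sub>\<le>\<^sub>0" using b1 nonpos_Ints_subset_Ints by blast
  have poch: "pochhammer (b + 1) (Suc a) = Gamma (real a + b + 2) / Gamma (b + 1)"
    using pochhammer_Gamma[OF np, of "Suc a"] by (simp add: algebra_simps)
  have G1: "Gamma (b + 1) \<noteq> 0" using np by (simp add: Gamma_eq_zero_iff)
  have ab: "real a + b + 2 \<notin> \<int>\<^sub>\<le>\<^sub>0"
  proof
    assume "real a + b + 2 \<in> \<int>\<^sub>\<le>\<^sub>0"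
    hence "real a + b + 2 \<in> \<int>" using nonpos_Ints_subset_Ints by blast
    hence "real a + b + 2 - real a - 1 \<in> \<int>" by (intro Ints_diff) auto
    thus False using b1 by (simp add: algebra_simps)
  qed
  have G2: "Gamma (real a + b + 2) \<noteq> 0" using ab by (simp add: Gamma_eq_zero_iff)
  have Gf: "Gamma (real a + 1) = fact a" using Gamma_fact[of a] by (simp add: add.commute)
  have pw: "(2::real) powr (1 + real a + b) = 2 powr (b + 1) * 2^a"
    by (simp add: powr_add powr_realpow algebra_simps)
  show ?thesis unfolding P1 nu_def poch Gf pw using G1 G2
    by (simp add: field_simps)
qed


theorem mainTheorem15:
  fixes a :: nat and b :: real
  assumes "b \<notin> \<int>"
  shows "(\<exists>p q. is_rho a b p q) \<and> (\<forall>p q. is_rho a b p q \<longrightarrow> rho_at_1 b p q = nu a b)"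
proof (intro conjI allI impI)
  show "\<exists>p q. is_rho a b p q" using Pex_rho[OF assms] by blast
next
  fix p q assume r: "is_rho a b p q"
  have b1: "b + 1 \<notin> \<int>" using assms by (metis Ints_1 Ints_diff add_diff_cancel_right')
  have q1: "poly q 1 \<noteq> 0" using r unfolding is_rho_def in_Qpm_def by blast
  hence q: "q \<noteq> 0" by auto
  have L1: "Lop (b + 1) p q = [:1,-1:]^a * q^2"
    by (rule deriv_to_Lop[OF q]) (use r in \<open>simp add: is_rho_def\<close>)
  have L2: "Lop (b + 1) (Pex a b) 1 = [:1,-1:]^a * 1^2"
    by (rule deriv_to_Lop) (use Pex_rho[OF assms, of a] in \<open>simp_all add: is_rho_def\<close>)
  have "Lop (b + 1) (p - Pex a b * q) q = 0"
    unfolding Lop_comb L1 L2 by simp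
  hence "p - Pex a b * q = 0" by (rule Lop_zero[OF b1 q])
  hence "p = Pex a b * q" by simp
  hence "rho_at_1 b p q = 2 powr (b + 1) * poly (Pex a b) 1"
    unfolding rho_at_1_def using q1 by simp
  thus "rho_at_1 b p q = nu a b" using Pex_value[OF assms] by simp
qed


end
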